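(* Let $G$ be an undirected multigraph with minimum degree at least $3$ and let $(C,F)$ be a FVC in $G$. Then $|F|\le e(C,F)$.
   Context: The degree of a vertex counts edge-endpoints, a self-loop contributing two. For disjoint $X,Y\subseteq V(G)$, $e(X,Y)$ is the number of edges with one endpoint in $X$ and the other in $Y$. A feedback vertex cut (FVC) in $G$ is a pair of disjoint sets $C,F\subseteq V(G)$ such that $G[F]$ is a forest (self-loops and parallel edges count as cycles) and every tree $T$ of $G[F]$ satisfies $e(V(T),V(G)\setminus(C\cup F))\le1$. *)

theory Defs
  imports Main
begin

text \<open>Self-loops (fst = snd) and parallel edges are allowed.\<close>

definition multigraph :: "'v set \<Rightarrow> 'e set \<Rightarrow> ('e \<Rightarrow> 'v \<times> 'v) \<Rightarrow> bool" where
  "multigraph V E ends \<longleftrightarrow> finite V \<and> finite E \<and>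
     (\<forall>e\<in>E. fst (ends e) \<in> V \<and> snd (ends e) \<in> V)"

text \<open>Degree: number of edge-endpoints at v (a loop contributes two).\<close>
definition degree :: "'e set \<Rightarrow> ('e \<Rightarrow> 'v \<times> 'v) \<Rightarrow> 'v \<Rightarrow> nat" where
  "degree E ends v = card {e\<in>E. fst (ends e) = v} + card {e\<in>E. snd (ends e) = v}"

definition e_between :: "'e set \<Rightarrow> ('e \<Rightarrow> 'v \<times> 'v) \<Rightarrow> 'v set \<Rightarrow> 'v set \<Rightarrow> nat" where
  "e_between E ends X Y = card {e\<in>E. (fst (ends e) \<in> X \<and> snd (ends e) \<in> Y) \<or>
                                     (fst (ends e) \<in> Y \<and> snd (ends e) \<in> X)}"

definition joins :: "('e \<Rightarrow> 'v \<times> 'v) \<Rightarrow> 'e \<Rightarrow> 'v \<Rightarrow> 'v \<Rightarrow> bool" where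
  "joins ends e u v \<longleftrightarrow> ends e = (u, v) \<or> ends e = (v, u)"

definition induced_edges :: "'e set \<Rightarrow> ('e \<Rightarrow> 'v \<times> 'v) \<Rightarrow> 'v set \<Rightarrow> 'e set" where
  "induced_edges E ends S = {e\<in>E. fst (ends e) \<in> S \<and> snd (ends e) \<in> S}"

text \<open>For k = 1 this is a self-loop, for k = 2 a pair of parallel edges.\<close>
definition has_cycle :: "'e set \<Rightarrow> ('e \<Rightarrow> 'v \<times> 'v) \<Rightarrow> bool" where
  "has_cycle E ends \<longleftrightarrow> (\<exists>vs es. length vs = length es \<and> length es \<ge> 1 \<and>
      distinct vs \<and> distinct es \<and> set es \<subseteq> E \<and>
      (\<forall>i<length es. joins ends (es ! i) (vs ! i) (vs ! ((i + 1) mod length es))))"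

definition is_forest_on :: "'e set \<Rightarrow> ('e \<Rightarrow> 'v \<times> 'v) \<Rightarrow> 'v set \<Rightarrow> bool" where
  "is_forest_on E ends F \<longleftrightarrow> \<not> has_cycle (induced_edges E ends F) ends"

definition component :: "'e set \<Rightarrow> ('e \<Rightarrow> 'v \<times> 'v) \<Rightarrow> 'v set \<Rightarrow> 'v \<Rightarrow> 'v set" where
  "component E ends F v =
     {u. (v, u) \<in> ({(x, y). \<exists>e\<in>induced_edges E ends F. joins ends e x y})\<^sup>*}"

definition FVC :: "'v set \<Rightarrow> 'e set \<Rightarrow> ('e \<Rightarrow> 'v \<times> 'v) \<Rightarrow> 'v set \<Rightarrow> 'v set \<Rightarrow> bool" where
  "FVC V E ends C F \<longleftrightarrow> C \<subseteq> V \<and> F \<subseteq> V \<and> C \<inter> F = {} \<and>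
     is_forest_on E ends F \<and>
     (\<forall>v\<in>F. e_between E ends (component E ends F v) (V - (C \<union> F)) \<le> 1)"

end

theory Submission
  imports Defs
begin


definition inc :: "'e set \<Rightarrow> ('e \<Rightarrow> 'v \<times> 'v) \<Rightarrow> 'v \<Rightarrow> 'e set" where
  "inc E ends v = {e\<in>E. fst (ends e) = v \<or> snd (ends e) = v}"

definition is_path :: "'e set \<Rightarrow> ('e \<Rightarrow> 'v \<times> 'v) \<Rightarrow> 'v set \<Rightarrow> 'v list \<Rightarrow> 'e list \<Rightarrow> bool" where
  "is_path E ends V vs es \<longleftrightarrow> length vs = Suc (length es) \<and> distinct vs \<and> distinct es \<and>
     set es \<subseteq> E \<and> set vs \<subseteq> V \<and> (\<forall>i<length es. joins ends (es!i) (vs!i) (vs!Suc i))"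

lemma has_cycle_mono: "E1 \<subseteq> E \<Longrightarrow> has_cycle E1 ends \<Longrightarrow> has_cycle E ends"
  unfolding has_cycle_def by blast

lemma joins_sym: "joins ends e x y = joins ends e y x"
  unfolding joins_def by auto

lemma path_len: "finite V \<Longrightarrow> is_path E ends V vs es \<Longrightarrow> length es < card V"
proof -
  assume "finite V" "is_path E ends V vs es"
  then have "card (set vs) \<le> card V" unfolding is_path_def by (auto intro: card_mono)
  moreover have "card (set vs) = length vs" using \<open>is_path E ends V vs es\<close>
    unfolding is_path_def by (simp add: distinct_card)
  ultimately have "card (set vs) \<le> card V" "card (set vs) = length vs" by auto
  then show ?thesis using \<open>is_path E ends V vs es\<close> unfolding is_path_def by simp
qed

lemma cycle_from_mindeg:
  assumes fin: "finite V" "finite E" and ends: "\<forall>e\<in>E. fst (ends e) \<in> V \<and> snd (ends e) \<in> V"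
    and ne: "V \<noteq> {}" and deg: "\<forall>v\<in>V. 2 \<le> card (inc E ends v)"
  shows "has_cycle E ends"
proof -
  obtain v0 where "v0 \<in> V" using ne by blast
  define S where "S = {length es | vs es. is_path E ends V vs es}"
  have "is_path E ends V [v0] []" using \<open>v0 \<in> V\<close> unfolding is_path_def by simp
  then have "0 \<in> S" unfolding S_def by force
  have "S \<subseteq> {..card V}" unfolding S_def using path_len[OF fin(1)] by fastforce
  then have "finite S" using finite_subset by blast
  define m where "m = Max S"
  have "m \<in> S" unfolding m_def using \<open>finite S\<close> \<open>0 \<in> S\<close> Max_in by blast
  then obtain vs es where P: "is_path E ends V vs es" and lm: "length es = m" unfolding S_def by blast
  have maxm: "\<And>vs' es'. is_path E ends V vs' es' \<Longrightarrow> length es' \<le> m"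
    unfolding m_def S_def using \<open>finite S\<close> S_def by (metis (mono_tags, lifting) Max_ge mem_Collect_eq)
  have lv: "length vs = Suc m" using P lm unfolding is_path_def by simp
  define x where "x = vs ! m"
  have "x \<in> V" using P lv unfolding is_path_def x_def by (metis lessI nth_mem subsetD)
  define g where "g = es ! (m - 1)"
  have "\<not> inc E ends x \<subseteq> {g}"
  proof
    assume "inc E ends x \<subseteq> {g}"
    then have "card (inc E ends x) \<le> card {g}" by (intro card_mono) simp_all
    then have "card (inc E ends x) \<le> 1" by simp
    then show False using deg \<open>x \<in> V\<close> by fastforce
  qed
  then obtain f where f: "f \<in> inc E ends x" "f \<noteq> g" by blast
  define z where "z = (if fst (ends f) = x then snd (ends f) else fst (ends f))"
  have fj: "joins ends f x z" using f(1) unfolding z_def joins_def inc_def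
    by (cases "ends f") auto
  have "f \<in> E" using f(1) unfolding inc_def by simp
  have "z \<in> V" using ends \<open>f \<in> E\<close> unfolding z_def by auto
  have fnot: "f \<notin> set es"
  proof
    assume "f \<in> set es"
    then obtain i where i: "i < m" "es ! i = f" using lm by (metis in_set_conv_nth)
    show False
    proof (cases "i = m - 1")
      case True then show ?thesis using i f(2) g_def by simp
    next
      case False
      then have "i < m" "Suc i < m" using i by auto
      have "joins ends f (vs!i) (vs!Suc i)" using P i lm unfolding is_path_def by auto
      moreover have "vs!i \<noteq> x" "vs ! Suc i \<noteq> x"
        using P lv \<open>i < m\<close> \<open>Suc i < m\<close> unfolding is_path_def x_def
        by (auto simp: nth_eq_iff_index_eq)
      moreover have "fst (ends f) = x \<or> snd (ends f) = x" using f(1) unfolding inc_def by simp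
      ultimately show False unfolding joins_def by auto
    qed
  qed
  show ?thesis
  proof (cases "z \<in> set vs")
    case False
    have "is_path E ends V (vs @ [z]) (es @ [f])"
      using P unfolding is_path_def
    proof (intro conjI)
      show "\<forall>i<length (es @ [f]). joins ends ((es @ [f]) ! i) ((vs @ [z]) ! i) ((vs @ [z]) ! Suc i)"
      proof (intro allI impI)
        fix i assume "i < length (es @ [f])"
        then have "i < m \<or> i = m" using lm by auto
        then show "joins ends ((es @ [f]) ! i) ((vs @ [z]) ! i) ((vs @ [z]) ! Suc i)"
        proof
          assume "i < m" then show ?thesis using P lm lv unfolding is_path_def by (auto simp: nth_append)
        next
          assume "i = m" then show ?thesis using fj lm lv x_def by (auto simp: nth_append)
        qed
      qed
    qed (use P False fnot \<open>f \<in> E\<close> \<open>z \<in> V\<close> in \<open>auto simp: is_path_def\<close>)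
    then have "length (es @ [f]) \<le> m" using maxm by blast
    then show ?thesis using lm by simp
  next
    case True
    then obtain j where j: "j < Suc m" "vs ! j = z" using lv by (metis in_set_conv_nth)
    define vs' where "vs' = drop j vs"
    define es' where "es' = drop j es @ [f]"
    have len: "length vs' = Suc m - j" "length es' = Suc m - j" using lv lm j unfolding vs'_def es'_def by auto
    show ?thesis unfolding has_cycle_def
    proof (intro exI conjI)
      show "length vs' = length es'" using len by simp
      show "1 \<le> length es'" using len j by simp
      show "distinct vs'" using P unfolding vs'_def is_path_def by simp
      show "distinct es'" using P fnot unfolding es'_def is_path_def by (auto dest: in_set_dropD)
      show "set es' \<subseteq> E" using P \<open>f \<in> E\<close> unfolding es'_def is_path_def by (auto dest: in_set_dropD)
      show "\<forall>i<length es'. joins ends (es' ! i) (vs' ! i) (vs' ! ((i + 1) mod length es'))"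
      proof (intro allI impI)
        fix i assume i: "i < length es'"
        show "joins ends (es' ! i) (vs' ! i) (vs' ! ((i + 1) mod length es'))"
        proof (cases "i < m - j")
          case True
          then have "(i + 1) mod length es' = Suc i" using len by simp
          moreover have "es' ! i = es ! (j + i)" using True lm unfolding es'_def by (simp add: nth_append)
          moreover have "vs' ! i = vs ! (j + i)" "vs' ! Suc i = vs ! Suc (j + i)"
            using True lv j unfolding vs'_def by auto
          moreover have "j + i < length es" using True lm by simp
          ultimately show ?thesis using P unfolding is_path_def by auto
        next
          case False
          then have ii: "i = m - j" using i len by simp
          then have "(i + 1) mod length es' = 0" using len j by (simp add: Suc_diff_le)
          moreover have "es' ! i = f" using ii lm j unfolding es'_def by (simp add: nth_append)
          moreover have "vs' ! i = x" "vs' ! 0 = z" using ii lv j unfolding vs'_def x_def by auto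
          ultimately show ?thesis using fj by simp
        qed
      qed
    qed
  qed
qed


lemma forest_card:
  "finite V \<Longrightarrow> finite E \<Longrightarrow> \<forall>e\<in>E. fst (ends e) \<in> V \<and> snd (ends e) \<in> V \<Longrightarrow> V \<noteq> {}
   \<Longrightarrow> \<not> has_cycle E ends \<Longrightarrow> card E < card V"
proof (induction "card V" arbitrary: V E)
  case 0
  then show ?case by simp
next
  case (Suc n)
  have "\<exists>v\<in>V. card (inc E ends v) \<le> 1"
  proof (rule ccontr)
    assume "\<not> ?thesis"
    then have "\<forall>v\<in>V. 2 \<le> card (inc E ends v)" by auto
    then show False using cycle_from_mindeg[of V E ends] Suc.prems by blast
  qed
  then obtain v where v: "v \<in> V" "card (inc E ends v) \<le> 1" by blast
  define V1 where "V1 = V - {v}"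
  define E1 where "E1 = E - inc E ends v"
  have ends1: "\<forall>e\<in>E1. fst (ends e) \<in> V1 \<and> snd (ends e) \<in> V1"
    using Suc.prems(3) unfolding E1_def V1_def inc_def by auto
  have nc1: "\<not> has_cycle E1 ends" using Suc.prems(5) has_cycle_mono[of E1 E ends] unfolding E1_def by blast
  have cE: "card E \<le> card E1 + 1"
  proof -
    have "E \<subseteq> E1 \<union> inc E ends v" unfolding E1_def inc_def by auto
    then have "card E \<le> card (E1 \<union> inc E ends v)" using Suc.prems(2)
      by (intro card_mono) (auto simp: E1_def inc_def)
    also have "\<dots> \<le> card E1 + card (inc E ends v)" by (rule card_Un_le)
    finally show ?thesis using v(2) by simp
  qed
  show ?case
  proof (cases "V1 = {}")
    case True
    have "E = {}"
    proof (rule ccontr)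
      assume "E \<noteq> {}"
      then obtain e where "e \<in> E" by blast
      then have "ends e = (v, v)" using Suc.prems(3) True unfolding V1_def
        by (metis Diff_iff empty_iff insert_iff prod.collapse)
      then have "has_cycle E ends" unfolding has_cycle_def joins_def
        by (intro exI[of _ "[v]"] exI[of _ "[e]"]) (use \<open>e \<in> E\<close> in auto)
      then show False using Suc.prems(5) by blast
    qed
    then show ?thesis using v(1) Suc.prems(1) by (auto simp: card_gt_0_iff)
  next
    case False
    have "n = card V1" using Suc.hyps(2) v(1) Suc.prems(1) unfolding V1_def by simp
    then have "card E1 < card V1" using Suc.hyps(1)[of V1 E1] Suc.prems(1,2) ends1 False nc1
      unfolding V1_def E1_def by blast
    then show ?thesis using cE \<open>n = card V1\<close> Suc.hyps(2) by simp
  qed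
qed


lemma mod_ne_self: "p < (k::nat) \<Longrightarrow> 0 < t \<Longrightarrow> t < k \<Longrightarrow> (p + t) mod k \<noteq> p"
proof -
  assume a: "p < k" "0 < t" "t < k"
  show ?thesis
  proof (cases "p + t < k")
    case True then show ?thesis using a by simp
  next
    case False
    then have "(p + t) mod k = p + t - k" using a by (simp add: le_mod_geq)
    moreover have "p + t - k \<noteq> p" using a False by arith
    ultimately show ?thesis by simp
  qed
qed

lemma aux_acyclic:
  fixes V :: "'v set" and E :: "'e set" and ends :: "'e \<Rightarrow> 'v \<times> 'v"
  assumes mg: "multigraph V E ends" and fvc: "FVC V E ends C F"
  defines "R \<equiv> V - (C \<union> F)"
  defines "I \<equiv> induced_edges E ends F"
  defines "ER \<equiv> {e\<in>E. (fst (ends e) \<in> F \<and> snd (ends e) \<in> R) \<or> (fst (ends e) \<in> R \<and> snd (ends e) \<in> F)}"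
  defines "ends' \<equiv> (\<lambda>e. (if fst (ends e) \<in> F then Some (fst (ends e)) else None,
                         if snd (ends e) \<in> F then Some (snd (ends e)) else None))"
  shows "\<not> has_cycle (I \<union> ER) ends'"
proof
  assume "has_cycle (I \<union> ER) ends'"
  then obtain vs es where cyc: "length vs = length es" "length es \<ge> 1" "distinct vs" "distinct es"
    "set es \<subseteq> I \<union> ER" "\<forall>i<length es. joins ends' (es ! i) (vs ! i) (vs ! ((i + 1) mod length es))"
    unfolding has_cycle_def by blast
  define k where "k = length es"
  have RF: "R \<inter> F = {}" unfolding R_def by auto
  have L1: "\<And>e. e \<in> I \<union> ER \<Longrightarrow> \<not> joins ends' e None None"
    unfolding joins_def ends'_def I_def ER_def induced_edges_def using RF by auto
  have L2: "\<And>e a b. e \<in> I \<union> ER \<Longrightarrow> joins ends' e (Some a) (Some b) \<Longrightarrow> e \<in> I \<and> joins ends e a b"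
    unfolding joins_def ends'_def I_def ER_def induced_edges_def
    by (auto split: if_splits simp: prod_eq_iff)
  have L3: "\<And>e a. e \<in> I \<union> ER \<Longrightarrow> joins ends' e (Some a) None \<Longrightarrow> e \<in> E \<and> a \<in> F \<and>
      ((fst (ends e) = a \<and> snd (ends e) \<in> R) \<or> (fst (ends e) \<in> R \<and> snd (ends e) = a))"
    unfolding joins_def ends'_def I_def ER_def induced_edges_def
    by (auto split: if_splits simp: prod_eq_iff)
  have esin: "\<And>i. i < k \<Longrightarrow> es ! i \<in> I \<union> ER" using cyc(5) k_def by (meson nth_mem subsetD)
  have jn: "\<And>i. i < k \<Longrightarrow> joins ends' (es ! i) (vs ! i) (vs ! ((i + 1) mod k))" using cyc(6) k_def by auto
  show False
  proof (cases "None \<in> set vs")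
    case False
    have sm: "\<And>i. i < k \<Longrightarrow> vs ! i = Some (the (vs ! i))"
      using False cyc(1) k_def by (metis nth_mem option.collapse)
    define ws where "ws = map the vs"
    have "has_cycle I ends" unfolding has_cycle_def
    proof (intro exI conjI)
      show "length ws = length es" using cyc(1) ws_def by simp
      show "1 \<le> length es" using cyc(2) .
      show "distinct ws" unfolding ws_def using cyc(3) False
        by (simp add: distinct_map inj_on_def) (metis option.collapse)
      show "distinct es" using cyc(4) .
      show "set es \<subseteq> I"
      proof
        fix e assume "e \<in> set es"
        then obtain i where i: "i < k" "es ! i = e" using k_def by (metis in_set_conv_nth)
        have "(i + 1) mod k < k" using i by simp
        then have "joins ends' (es ! i) (Some (the (vs ! i))) (Some (the (vs ! ((i + 1) mod k))))"
          using jn[OF i(1)] by (simp only: sm[OF i(1), symmetric] sm[OF \<open>(i + 1) mod k < k\<close>, symmetric])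
        then show "e \<in> I" using L2[OF esin[OF i(1)]] i(2) by blast
      qed
      show "\<forall>i<length es. joins ends (es ! i) (ws ! i) (ws ! ((i + 1) mod length es))"
      proof (intro allI impI)
        fix i assume i: "i < length es"
        have "0 < k" using i k_def by (cases es) auto
        then have "(i + 1) mod k < k" by simp
        have ik: "i < k" using i k_def by simp
        have "joins ends' (es ! i) (Some (the (vs ! i))) (Some (the (vs ! ((i + 1) mod k))))"
          using jn[OF ik] by (simp only: sm[OF ik, symmetric] sm[OF \<open>(i + 1) mod k < k\<close>, symmetric])
        then have "joins ends (es ! i) (the (vs ! i)) (the (vs ! ((i + 1) mod k)))"
          using L2[OF esin[OF ik]] by blast
        then show "joins ends (es ! i) (ws ! i) (ws ! ((i + 1) mod length es))"
        proof -
          have lvk: "length vs = k" using cyc(1) k_def by simp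
          have e1: "ws ! i = the (vs ! i)" using ik lvk unfolding ws_def by simp
          have e2: "ws ! ((i + 1) mod k) = the (vs ! ((i + 1) mod k))"
            using \<open>(i + 1) mod k < k\<close> lvk unfolding ws_def by simp
          have "length es = k" using k_def by simp
          then show ?thesis using e1 e2 \<open>joins ends (es ! i) (the (vs ! i)) (the (vs ! ((i + 1) mod k)))\<close>
            by simp
        qed
      qed
    qed
    then show False using fvc unfolding FVC_def is_forest_on_def I_def by blast
  next
    case True
    then obtain p where p: "p < k" "vs ! p = None" using cyc(1) k_def by (metis in_set_conv_nth)
    have k2: "k \<ge> 2"
    proof (rule ccontr)
      assume "\<not> k \<ge> 2"
      then have "k = 1" using cyc(2) k_def by simp
      then have "p = 0" using p by simp
      then show False using L1[OF esin[of 0]] jn[of 0] p \<open>k = 1\<close> by simp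
    qed
    define q where "q = (\<lambda>t. (p + t) mod k)"
    have qlt: "\<And>t. q t < k" using p q_def by simp
    have qS: "\<And>t. (q t + 1) mod k = q (Suc t)" unfolding q_def by (simp add: mod_Suc_eq)
    have notN: "\<And>t. 0 < t \<Longrightarrow> t < k \<Longrightarrow> vs ! q t \<noteq> None"
    proof
      fix t assume t: "0 < t" "t < k" "vs ! q t = None"
      then have "q t = p" using cyc(3) cyc(1) k_def qlt p nth_eq_iff_index_eq by metis
      then show False using mod_ne_self[OF p(1) t(1) t(2)] q_def by simp
    qed
    define rel where "rel = {(x, y). \<exists>e\<in>induced_edges E ends F. joins ends e x y}"
    define w where "w = the (vs ! q 1)"
    have reach: "\<And>t. 0 < t \<Longrightarrow> t < k \<Longrightarrow> (w, the (vs ! q t)) \<in> rel\<^sup>*"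
    proof -
      fix t show "0 < t \<Longrightarrow> t < k \<Longrightarrow> (w, the (vs ! q t)) \<in> rel\<^sup>*"
      proof (induction t)
        case 0 then show ?case by simp
      next
        case (Suc t)
        show ?case
        proof (cases "t = 0")
          case True then show ?thesis unfolding w_def by simp
        next
          case False
          then have IH: "(w, the (vs ! q t)) \<in> rel\<^sup>*" using Suc by simp
          have a: "vs ! q t = Some (the (vs ! q t))" using notN[of t] False Suc.prems by simp
          have b: "vs ! q (Suc t) = Some (the (vs ! q (Suc t)))" using notN[of "Suc t"] Suc.prems by simp
          have "joins ends' (es ! q t) (vs ! q t) (vs ! q (Suc t))" using jn[OF qlt[of t]] qS by simp
          then have "es ! q t \<in> I \<and> joins ends (es ! q t) (the (vs ! q t)) (the (vs ! q (Suc t)))"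
            using L2[OF esin[OF qlt[of t]]] a b by metis
          then have "(the (vs ! q t), the (vs ! q (Suc t))) \<in> rel" unfolding rel_def I_def by blast
          then show ?thesis using IH by (rule rtrancl_into_rtrancl[rotated])
        qed
      qed
    qed
    define u where "u = the (vs ! q (k - 1))"
    have "(w, u) \<in> rel\<^sup>*" using reach[of "k - 1"] k2 unfolding u_def by simp
    moreover have "sym rel" unfolding sym_def rel_def joins_def by auto
    ultimately have uw: "(u, w) \<in> rel\<^sup>*" by (meson sym_rtrancl symE)
    define a where "a = es ! q (k - 1)"
    define b where "b = es ! p"
    have qk: "q (Suc (k - 1)) = p" using k2 p unfolding q_def by simp
    have "joins ends' a (vs ! q (k - 1)) (vs ! p)" unfolding a_def using jn[OF qlt] qS qk by metis
    then have "joins ends' a (Some u) None" using notN[of "k - 1"] k2 p(2) unfolding u_def by simp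
    then have A: "a \<in> E \<and> u \<in> F \<and> ((fst (ends a) = u \<and> snd (ends a) \<in> R) \<or> (fst (ends a) \<in> R \<and> snd (ends a) = u))"
      using L3 esin[OF qlt] a_def by blast
    have q0: "q 0 = p" using p q_def by simp
    have "joins ends' b (vs ! p) (vs ! q 1)" unfolding b_def using jn[OF p(1)] qS[of 0] q0 by simp
    then have "joins ends' b (Some w) None" using notN[of 1] k2 p(2) unfolding w_def
      by (simp add: joins_sym)
    then have B: "b \<in> E \<and> w \<in> F \<and> ((fst (ends b) = w \<and> snd (ends b) \<in> R) \<or> (fst (ends b) \<in> R \<and> snd (ends b) = w))"
      using L3 esin[OF p(1)] b_def by blast
    have "q (k - 1) \<noteq> p" using mod_ne_self[OF p(1), of "k - 1"] k2 q_def by simp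
    then have "a \<noteq> b" unfolding a_def b_def using cyc(4) k_def qlt p(1) nth_eq_iff_index_eq by metis
    define T where "T = component E ends F u"
    have "u \<in> T" unfolding T_def component_def by simp
    have "w \<in> T" unfolding T_def component_def using uw rel_def by simp
    define X where "X = {e\<in>E. (fst (ends e) \<in> T \<and> snd (ends e) \<in> R) \<or> (fst (ends e) \<in> R \<and> snd (ends e) \<in> T)}"
    have "{a, b} \<subseteq> X" unfolding X_def using A B \<open>u \<in> T\<close> \<open>w \<in> T\<close> by auto
    moreover have "finite X" using mg unfolding multigraph_def X_def by simp
    ultimately have "card {a, b} \<le> card X" by (rule card_mono[rotated])
    then have "2 \<le> e_between E ends T R" unfolding e_between_def X_def using \<open>a \<noteq> b\<close> by simp
    moreover have "e_between E ends T R \<le> 1" using fvc A unfolding FVC_def T_def R_def by blast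
    ultimately show False by simp
  qed
qed


lemma sum_card_fst:
  assumes "finite E" "finite F"
  shows "(\<Sum>v\<in>F. card {e\<in>E. f e = v}) = card {e\<in>E. f e \<in> F}"
proof -
  have "card (\<Union>v\<in>F. {e\<in>E. f e = v}) = (\<Sum>v\<in>F. card {e\<in>E. f e = v})"
    using assms by (intro card_UN_disjoint) auto
  moreover have "(\<Union>v\<in>F. {e\<in>E. f e = v}) = {e\<in>E. f e \<in> F}" by auto
  ultimately show ?thesis by simp
qed

theorem lemma19:
  fixes V :: "'v set" and E :: "'e set" and ends :: "'e \<Rightarrow> 'v \<times> 'v"
  assumes "multigraph V E ends"
    and "\<forall>v\<in>V. degree E ends v \<ge> 3"
    and "FVC V E ends C F"
  shows "card F \<le> e_between E ends C F"
proof -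
  note mg = assms(1) and fvc = assms(3)
  define R where "R = V - (C \<union> F)"
  define I where "I = induced_edges E ends F"
  define ER where "ER = {e\<in>E. (fst (ends e) \<in> F \<and> snd (ends e) \<in> R) \<or> (fst (ends e) \<in> R \<and> snd (ends e) \<in> F)}"
  define ends' where "ends' = (\<lambda>e. (if fst (ends e) \<in> F then Some (fst (ends e)) else None,
                         if snd (ends e) \<in> F then Some (snd (ends e)) else None))"
  define XC where "XC = {e\<in>E. (fst (ends e) \<in> C \<and> snd (ends e) \<in> F) \<or> (fst (ends e) \<in> F \<and> snd (ends e) \<in> C)}"
  have finV: "finite V" and finE: "finite E" and endsV: "\<forall>e\<in>E. fst (ends e) \<in> V \<and> snd (ends e) \<in> V"
    using mg unfolding multigraph_def by auto
  have FV: "F \<subseteq> V" and CV: "C \<subseteq> V" and CF: "C \<inter> F = {}" using fvc unfolding FVC_def by auto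
  have finF: "finite F" using finV FV finite_subset by blast
  have nc: "\<not> has_cycle (I \<union> ER) ends'"
    using aux_acyclic[OF mg fvc] unfolding R_def I_def ER_def ends'_def by blast
  define V' where "V' = insert None (Some ` F)"
  have "card (I \<union> ER) < card V'"
  proof (rule forest_card[OF _ _ _ _ nc])
    show "finite V'" using finF V'_def by simp
    show "finite (I \<union> ER)" using finE unfolding I_def ER_def induced_edges_def by simp
    show "V' \<noteq> {}" using V'_def by simp
    show "\<forall>e\<in>I \<union> ER. fst (ends' e) \<in> V' \<and> snd (ends' e) \<in> V'"
      unfolding V'_def ends'_def by auto
  qed
  moreover have "card V' = card F + 1" unfolding V'_def using finF
    by (simp add: card_image)
  moreover have "card (I \<union> ER) = card I + card ER"
    using finE unfolding I_def ER_def induced_edges_def R_def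
    by (intro card_Un_disjoint) auto
  ultimately have bound: "card I + card ER \<le> card F" by simp
  define A where "A = {e\<in>E. fst (ends e) \<in> F}"
  define B where "B = {e\<in>E. snd (ends e) \<in> F}"
  have "(\<Sum>v\<in>F. degree E ends v) = card A + card B"
    unfolding degree_def A_def B_def
    by (simp add: sum.distrib sum_card_fst[OF finE finF])
  moreover have "3 * card F \<le> (\<Sum>v\<in>F. degree E ends v)"
  proof -
    have "(\<Sum>v\<in>F. (3::nat)) \<le> (\<Sum>v\<in>F. degree E ends v)"
      using assms(2) FV by (intro sum_mono) auto
    then show ?thesis by simp
  qed
  moreover have "card A + card B = card (A \<union> B) + card (A \<inter> B)"
    using finE unfolding A_def B_def by (intro card_Un_Int) auto
  moreover have "A \<inter> B = I" unfolding A_def B_def I_def induced_edges_def by auto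
  moreover have "A \<union> B = I \<union> XC \<union> ER"
    unfolding A_def B_def I_def induced_edges_def XC_def ER_def R_def using endsV by auto
  moreover have "card (I \<union> XC \<union> ER) = card I + card XC + card ER"
  proof -
    have f: "finite I" "finite XC" "finite ER" using finE
      unfolding I_def XC_def ER_def induced_edges_def by auto
    have "card (I \<union> XC \<union> ER) = card (I \<union> XC) + card ER"
      using f CF unfolding I_def XC_def ER_def induced_edges_def R_def
      by (intro card_Un_disjoint) auto
    moreover have "card (I \<union> XC) = card I + card XC"
      using f CF unfolding I_def XC_def induced_edges_def
      by (intro card_Un_disjoint) auto
    ultimately show ?thesis by simp
  qed
  moreover have "e_between E ends C F = card XC" unfolding e_between_def XC_def by simp
  ultimately show ?thesis using bound by simp
qed

end
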